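(* Let $Y$ be a random variable whose moment generating function $E[e^{tY}]$ exists for $|t|<r_0$ for some $r_0>0$. Let $(Y_j)_{j\ge1}$ be mutually independent copies of $Y$, $S_0=0$, $S_k=Y_1+\cdots+Y_k$ for $k\ge1$. Define the probabilistic bivariate Bell polynomials $\phi_n^Y(x,y)$ by $$\Big(1+y\big(E[e^{Yt}]-1\big)\Big)^{x}=\sum_{n=0}^{\infty}\phi_n^Y(x,y)\frac{t^n}{n!}.$$ Then for every $n\ge 0$, $$\phi_n^Y(x,y)=\sum_{k=0}^{n}{n\brace k}_Y (x)_k\, y^k,$$ where ${n\brace k}_Y=\frac{1}{k!}\sum_{i=0}^{k}\binom{k}{i}(-1)^{k-i}E[S_i^n]$ for $0\le k\le n$.
   Context: $(x)_0=1$, $(x)_k=x(x-1)\cdots(x-k+1)$ for $k\ge1$. The power $(1+u)^x$ is understood via the binomial series $\sum_{k\ge0}\binom{x}{k}u^k$, and the identity is one of power series in $t$; $x,y$ are variables. The numbers ${n\brace k}_Y$ are the probabilistic Stirling numbers of the second kind associated with $Y$. *)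

theory Defs
  imports "HOL-Probability.Probability" "HOL-Computational_Algebra.Formal_Power_Series"
begin

definition falling_fact :: "real \<Rightarrow> nat \<Rightarrow> real" where
  "falling_fact x k = (\<Prod>i<k. x - real i)"

definition mgf :: "'a measure \<Rightarrow> ('a \<Rightarrow> real) \<Rightarrow> real \<Rightarrow> real" where
  "mgf M Y t = (\<integral>\<omega>. exp (t * Y \<omega>) \<partial>M)"

definition mgf_fps :: "'a measure \<Rightarrow> ('a \<Rightarrow> real) \<Rightarrow> real fps" where
  "mgf_fps M Y = Abs_fps (\<lambda>n. (deriv ^^ n) (mgf M Y) 0 / fact n)"

text \<open>Generating series (1 + y(E[e^{Yt}] - 1))^x, the power understood via
  the binomial series sum_k (x choose k) u^k with u = y(E[e^{Yt}] - 1).\<close>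
definition bell_gf :: "'a measure \<Rightarrow> ('a \<Rightarrow> real) \<Rightarrow> real \<Rightarrow> real \<Rightarrow> real fps" where
  "bell_gf M Y x y = fps_binomial x oo (fps_const y * (mgf_fps M Y - 1))"

definition prob_bell :: "'a measure \<Rightarrow> ('a \<Rightarrow> real) \<Rightarrow> nat \<Rightarrow> real \<Rightarrow> real \<Rightarrow> real" where
  "prob_bell M Y n x y = fact n * fps_nth (bell_gf M Y x y) n"

definition partial_sum :: "(nat \<Rightarrow> 'a \<Rightarrow> real) \<Rightarrow> nat \<Rightarrow> 'a \<Rightarrow> real" where
  "partial_sum Ys k \<omega> = (\<Sum>j=1..k. Ys j \<omega>)"

definition prob_stirling :: "'a measure \<Rightarrow> (nat \<Rightarrow> 'a \<Rightarrow> real) \<Rightarrow> nat \<Rightarrow> nat \<Rightarrow> real" where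
  "prob_stirling M Ys n k = (1 / fact k) *
     (\<Sum>i=0..k. real (k choose i) * (-1) ^ (k - i) * (\<integral>\<omega>. (partial_sum Ys i \<omega>) ^ n \<partial>M))"

end

theory Submission
  imports Defs "HOL-Analysis.FPS_Convergence"
begin


lemma real_fps_nth_conv_deriv:
  fixes f :: "real fps"
  assumes "fps_conv_radius f > 0"
  shows   "fps_nth f n = (deriv ^^ n) (eval_fps f) 0 / fact n"
  using assms
proof (induction n arbitrary: f)
  case 0
  thus ?case by (simp add: eval_fps_def)
next
  case (Suc n f)
  have "(deriv ^^ Suc n) (eval_fps f) 0 = (deriv ^^ n) (deriv (eval_fps f)) 0"
    unfolding funpow_Suc_right o_def ..
  also have "eventually (\<lambda>z::real. z \<in> eball 0 (fps_conv_radius f)) (nhds 0)"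
    using Suc.prems by (intro eventually_nhds_in_open) (auto simp: zero_ereal_def)
  hence "eventually (\<lambda>z. deriv (eval_fps f) z = eval_fps (fps_deriv f) z) (nhds 0)"
    by eventually_elim (simp add: eval_fps_deriv)
  hence "(deriv ^^ n) (deriv (eval_fps f)) 0 = (deriv ^^ n) (eval_fps (fps_deriv f)) 0"
    by (intro higher_deriv_cong_ev refl)
  also have "\<dots> / fact n = fps_nth (fps_deriv f) n"
    using Suc.prems fps_conv_radius_deriv[of f] 
    by (intro Suc.IH [symmetric]) auto
  also have "\<dots> / of_nat (Suc n) = fps_nth f (Suc n)"
    by (simp add: fps_deriv_def del: of_nat_Suc)
  finally show ?case by (simp add: field_split_simps)
qed

lemma pow_fact_le_exp:
  fixes z :: real assumes "z \<ge> 0" and that: "finite I"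
  shows "(\<Sum>i\<in>I. z ^ i / fact i) \<le> exp z"
proof -
  have s: "(\<lambda>i. z ^ i / fact i) sums exp z"
    using exp_converges[of z] by (simp add: divide_inverse mult.commute scaleR_conv_of_real)
  show ?thesis
    using sum_le_suminf[OF sums_summable[OF s] that] assms sums_unique[OF s] by auto
qed

lemma exp_abs_max: "exp \<bar>z::real\<bar> = max (exp z) (exp (- z))"
  by (cases "z \<ge> 0") auto

context prob_space
begin

lemma integrable_exp_abs:
  fixes Y :: "'a \<Rightarrow> real" and r0 :: real
  assumes Y: "Y \<in> borel_measurable M"
    and I: "\<And>t. \<bar>t\<bar> < r0 \<Longrightarrow> integrable M (\<lambda>\<omega>. exp (t * Y \<omega>))"
    and t: "\<bar>t\<bar> < r0"
  shows "integrable M (\<lambda>\<omega>. exp \<bar>t * Y \<omega>\<bar>)"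
proof -
  have "integrable M (\<lambda>\<omega>. max (exp (t * Y \<omega>)) (exp ((- t) * Y \<omega>)))"
    using I[of t] I[of "-t"] t by (intro integrable_max) auto
  then show ?thesis by (simp add: exp_abs_max)
qed

lemma integrable_moment:
  fixes Y :: "'a \<Rightarrow> real" and r0 :: real
  assumes Y: "Y \<in> borel_measurable M"
    and r0: "r0 > 0"
    and I: "\<And>t. \<bar>t\<bar> < r0 \<Longrightarrow> integrable M (\<lambda>\<omega>. exp (t * Y \<omega>))"
  shows "integrable M (\<lambda>\<omega>. Y \<omega> ^ k)"
proof -
  define s where "s = r0 / 2"
  have s: "s > 0" "\<bar>s\<bar> < r0" using r0 by (auto simp: s_def)
  have int: "integrable M (\<lambda>\<omega>. fact k / s ^ k * exp \<bar>s * Y \<omega>\<bar>)"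
    using integrable_exp_abs[OF Y I s(2)] by auto
  show ?thesis
  proof (rule Bochner_Integration.integrable_bound[OF int])
    show "(\<lambda>\<omega>. Y \<omega> ^ k) \<in> borel_measurable M" using Y by measurable
    show "AE \<omega> in M. norm (Y \<omega> ^ k) \<le> norm (fact k / s ^ k * exp \<bar>s * Y \<omega>\<bar>)"
    proof (intro AE_I2)
      fix \<omega>
      have "\<bar>s * Y \<omega>\<bar> ^ k / fact k \<le> exp \<bar>s * Y \<omega>\<bar>"
        using pow_fact_le_exp[of "\<bar>s * Y \<omega>\<bar>" "{k}"] by simp
      hence "s ^ k * \<bar>Y \<omega>\<bar> ^ k \<le> fact k * exp \<bar>s * Y \<omega>\<bar>"
        using s by (simp add: abs_mult power_mult_distrib field_simps)
      hence "\<bar>Y \<omega>\<bar> ^ k \<le> fact k / s ^ k * exp \<bar>s * Y \<omega>\<bar>"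
        using s by (simp add: field_simps)
      thus "norm (Y \<omega> ^ k) \<le> norm (fact k / s ^ k * exp \<bar>s * Y \<omega>\<bar>)"
        by (simp add: power_abs abs_of_pos[OF s(1)])
    qed
  qed
qed

lemma mgf_sums:
  fixes Y :: "'a \<Rightarrow> real" and r0 :: real
  assumes Y: "Y \<in> borel_measurable M"
    and r0: "r0 > 0"
    and I: "\<And>t. \<bar>t\<bar> < r0 \<Longrightarrow> integrable M (\<lambda>\<omega>. exp (t * Y \<omega>))"
    and t: "\<bar>t\<bar> < r0"
  shows "(\<lambda>k. (\<integral>\<omega>. Y \<omega> ^ k \<partial>M) / fact k * t ^ k) sums mgf M Y t"
proof -
  define f where "f i \<omega> = (t * Y \<omega>) ^ i / fact i" for i \<omega>
  have feq: "f i = (\<lambda>\<omega>. (t ^ i / fact i) * Y \<omega> ^ i)" for i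
    by (auto simp: f_def power_mult_distrib)
  have fint: "integrable M (f i)" for i
  proof -
    have "integrable M (\<lambda>\<omega>. (t ^ i / fact i) * Y \<omega> ^ i)"
      using integrable_moment[OF Y r0 I, of i] by (intro integrable_mult_right)
    moreover have "f i = (\<lambda>\<omega>. (t ^ i / fact i) * Y \<omega> ^ i)"
      by (auto simp: f_def power_mult_distrib)
    ultimately show ?thesis by simp
  qed
  have fsum: "(\<lambda>i. f i \<omega>) sums exp (t * Y \<omega>)" for \<omega>
    using exp_converges[of "t * Y \<omega>"] by (simp add: f_def divide_inverse mult.commute scaleR_conv_of_real)
  have nsum: "summable (\<lambda>i. norm (f i \<omega>))" for \<omega>
  proof -
    have "(\<lambda>i. \<bar>t * Y \<omega>\<bar> ^ i / fact i) sums exp \<bar>t * Y \<omega>\<bar>"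
      using exp_converges[of "\<bar>t * Y \<omega>\<bar>"] by (simp add: divide_inverse mult.commute scaleR_conv_of_real)
    thus ?thesis by (simp add: f_def sums_summable power_abs)
  qed
  have isum: "summable (\<lambda>i. \<integral>\<omega>. norm (f i \<omega>) \<partial>M)"
  proof (rule bounded_imp_summable)
    show "0 \<le> (\<integral>\<omega>. norm (f i \<omega>) \<partial>M)" for i by simp
    fix n
    have "(\<Sum>k\<le>n. \<integral>\<omega>. norm (f k \<omega>) \<partial>M) = (\<integral>\<omega>. (\<Sum>k\<le>n. norm (f k \<omega>)) \<partial>M)"
      by (rule Bochner_Integration.integral_sum[where f="\<lambda>k \<omega>. norm (f k \<omega>)", symmetric]) (auto intro: integrable_norm fint)
    also have "\<dots> \<le> (\<integral>\<omega>. exp \<bar>t * Y \<omega>\<bar> \<partial>M)"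
    proof (rule integral_mono)
      show "integrable M (\<lambda>\<omega>. \<Sum>k\<le>n. norm (f k \<omega>))" using fint by auto
      show "integrable M (\<lambda>\<omega>. exp \<bar>t * Y \<omega>\<bar>)" by (rule integrable_exp_abs[OF Y I t])
      fix \<omega>
      show "(\<Sum>k\<le>n. norm (f k \<omega>)) \<le> exp \<bar>t * Y \<omega>\<bar>"
        using pow_fact_le_exp[of "\<bar>t * Y \<omega>\<bar>" "{..n}"] by (simp add: f_def power_abs)
    qed
    finally show "(\<Sum>k\<le>n. \<integral>\<omega>. norm (f k \<omega>) \<partial>M) \<le> (\<integral>\<omega>. exp \<bar>t * Y \<omega>\<bar> \<partial>M)" .
  qed
  have "(\<lambda>i. integral\<^sup>L M (f i)) sums (\<integral>\<omega>. (\<Sum>i. f i \<omega>) \<partial>M)"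
    using fint nsum isum by (intro sums_integral) auto
  moreover have "(\<lambda>\<omega>. \<Sum>i. f i \<omega>) = (\<lambda>\<omega>. exp (t * Y \<omega>))"
    using fsum sums_unique by (auto intro!: ext simp: sums_iff)
  moreover have "integral\<^sup>L M (f i) = (\<integral>\<omega>. Y \<omega> ^ i \<partial>M) / fact i * t ^ i" for i
    by (simp add: feq)
  ultimately show ?thesis by (simp add: mgf_def)
qed

lemma mgf_fps_eq:
  fixes Y :: "'a \<Rightarrow> real" and r0 :: real
  assumes Y: "Y \<in> borel_measurable M"
    and r0: "r0 > 0"
    and I: "\<And>t. \<bar>t\<bar> < r0 \<Longrightarrow> integrable M (\<lambda>\<omega>. exp (t * Y \<omega>))"
  shows "mgf_fps M Y = Abs_fps (\<lambda>k. (\<integral>\<omega>. Y \<omega> ^ k \<partial>M) / fact k)"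
proof -
  define F where "F = Abs_fps (\<lambda>k. (\<integral>\<omega>. Y \<omega> ^ k \<partial>M) / fact k)"
  have ev: "eval_fps F t = mgf M Y t" if "\<bar>t\<bar> < r0" for t
    using mgf_sums[OF Y r0 I that] by (simp add: F_def eval_fps_def sums_iff)
  have "summable (\<lambda>n. fps_nth F n * (r0/2) ^ n)"
    using mgf_sums[OF Y r0 I, of "r0/2"] r0 by (simp add: F_def sums_iff)
  hence "fps_conv_radius F \<ge> norm (r0/2)"
    unfolding fps_conv_radius_def by (rule conv_radius_geI)
  hence rad: "fps_conv_radius F > 0" using r0
    by (metis abs_of_pos ereal_less(2) half_gt_zero less_le_trans real_norm_def)
  have evn: "eventually (\<lambda>t. eval_fps F t = mgf M Y t) (nhds 0)"
  proof -
    have "eventually (\<lambda>t::real. t \<in> ball 0 r0) (nhds 0)"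
      using r0 by (intro eventually_nhds_in_open) auto
    thus ?thesis by eventually_elim (auto intro!: ev)
  qed
  have "fps_nth F n = (deriv ^^ n) (mgf M Y) 0 / fact n" for n
  proof -
    have "fps_nth F n = (deriv ^^ n) (eval_fps F) 0 / fact n"
      by (rule real_fps_nth_conv_deriv[OF rad])
    also have "(deriv ^^ n) (eval_fps F) 0 = (deriv ^^ n) (mgf M Y) 0"
      by (intro higher_deriv_cong_ev[OF evn] refl)
    finally show ?thesis .
  qed
  thus ?thesis unfolding mgf_fps_def F_def[symmetric] by (intro fps_ext) simp
qed

end


context prob_space
begin

lemma partial_sum_Suc: "partial_sum Ys (Suc i) \<omega> = partial_sum Ys i \<omega> + Ys (Suc i) \<omega>"
  by (simp add: partial_sum_def)

lemma partial_sum_meas: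
  assumes "\<And>j. j \<ge> 1 \<Longrightarrow> Ys j \<in> borel_measurable M"
  shows "partial_sum Ys i \<in> borel_measurable M"
  unfolding partial_sum_def using assms by (intro borel_measurable_sum) auto

lemma indep_partial:
  assumes ind: "indep_vars (\<lambda>_. borel) Ys {1..}"
  shows "indep_var borel (\<lambda>\<omega>. partial_sum Ys i \<omega> ^ a) borel (\<lambda>\<omega>. Ys (Suc i) \<omega> ^ b)"
proof -
  have "indep_var (PiM {1..i} (\<lambda>_. borel)) (\<lambda>\<omega>. restrict (\<lambda>j. Ys j \<omega>) {1..i})
                  (PiM {Suc i} (\<lambda>_. borel)) (\<lambda>\<omega>. restrict (\<lambda>j. Ys j \<omega>) {Suc i})"
    by (rule indep_var_restrict[OF ind]) auto
  moreover have "(\<lambda>f. (\<Sum>j\<in>{1..i}. f j) ^ a) \<in> borel_measurable (PiM {1..i} (\<lambda>_. borel :: real measure))"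
    by measurable
  moreover have "(\<lambda>f. (f (Suc i)) ^ b) \<in> borel_measurable (PiM {Suc i} (\<lambda>_. borel :: real measure))"
    by measurable
  ultimately have "indep_var borel ((\<lambda>f. (\<Sum>j\<in>{1..i}. f j) ^ a) \<circ> (\<lambda>\<omega>. restrict (\<lambda>j. Ys j \<omega>) {1..i}))
      borel ((\<lambda>f. (f (Suc i)) ^ b) \<circ> (\<lambda>\<omega>. restrict (\<lambda>j. Ys j \<omega>) {Suc i}))"
    by (rule indep_var_compose)
  moreover have "((\<lambda>f. (\<Sum>j\<in>{1..i}. f j) ^ a) \<circ> (\<lambda>\<omega>. restrict (\<lambda>j. Ys j \<omega>) {1..i}))
     = (\<lambda>\<omega>. partial_sum Ys i \<omega> ^ a)"
    by (auto simp: partial_sum_def fun_eq_iff)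
  moreover have "((\<lambda>f. (f (Suc i)) ^ b) \<circ> (\<lambda>\<omega>. restrict (\<lambda>j. Ys j \<omega>) {Suc i})) = (\<lambda>\<omega>. Ys (Suc i) \<omega> ^ b)"
    by (auto simp: fun_eq_iff)
  ultimately show ?thesis by simp
qed

lemma moment_copy:
  fixes Y :: "'a \<Rightarrow> real" and r0 :: real
  assumes Y: "Y \<in> borel_measurable M"
    and r0: "r0 > 0"
    and I: "\<And>t. \<bar>t\<bar> < r0 \<Longrightarrow> integrable M (\<lambda>\<omega>. exp (t * Y \<omega>))"
    and Ysm: "Ys j \<in> borel_measurable M"
    and D: "distr M borel (Ys j) = distr M borel Y"
  shows "integrable M (\<lambda>\<omega>. Ys j \<omega> ^ k)" "(\<integral>\<omega>. Ys j \<omega> ^ k \<partial>M) = (\<integral>\<omega>. Y \<omega> ^ k \<partial>M)"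
proof -
  have "integrable (distr M borel Y) (\<lambda>z::real. z ^ k)"
    using integrable_moment[OF Y r0 I, of k] Y by (subst integrable_distr_eq) auto
  hence "integrable (distr M borel (Ys j)) (\<lambda>z::real. z ^ k)" using D by simp
  thus "integrable M (\<lambda>\<omega>. Ys j \<omega> ^ k)" using Ysm by (subst (asm) integrable_distr_eq) auto
  have "(\<integral>\<omega>. Ys j \<omega> ^ k \<partial>M) = (\<integral>z. z ^ k \<partial>distr M borel (Ys j))"
    using Ysm by (subst integral_distr) auto
  also have "\<dots> = (\<integral>z. z ^ k \<partial>distr M borel Y)" using D by simp
  also have "\<dots> = (\<integral>\<omega>. Y \<omega> ^ k \<partial>M)"
    using Y by (subst integral_distr) auto
  finally show "(\<integral>\<omega>. Ys j \<omega> ^ k \<partial>M) = (\<integral>\<omega>. Y \<omega> ^ k \<partial>M)" .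
qed

lemma fps_power_moments:
  fixes Y :: "'a \<Rightarrow> real" and r0 :: real
  assumes Y: "Y \<in> borel_measurable M"
    and r0: "r0 > 0"
    and I: "\<And>t. \<bar>t\<bar> < r0 \<Longrightarrow> integrable M (\<lambda>\<omega>. exp (t * Y \<omega>))"
    and ind: "indep_vars (\<lambda>_. borel) Ys {1..}"
    and Ysm: "\<And>j. j \<ge> 1 \<Longrightarrow> Ys j \<in> borel_measurable M"
    and D: "\<And>j. j \<ge> 1 \<Longrightarrow> distr M borel (Ys j) = distr M borel Y"
  shows "integrable M (\<lambda>\<omega>. partial_sum Ys i \<omega> ^ n) \<and>
     fps_nth (Abs_fps (\<lambda>k. (\<integral>\<omega>. Y \<omega> ^ k \<partial>M) / fact k) ^ i) n = (\<integral>\<omega>. partial_sum Ys i \<omega> ^ n \<partial>M) / fact n"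
proof (induction i arbitrary: n)
  case 0
  show ?case by (simp add: partial_sum_def prob_space)
next
  case (Suc i)
  define F where "F = Abs_fps (\<lambda>k. (\<integral>\<omega>. Y \<omega> ^ k \<partial>M) / fact k)"
  let ?S = "partial_sum Ys i"
  let ?Z = "Ys (Suc i)"
  have prod: "integrable M (\<lambda>\<omega>. ?S \<omega> ^ a * ?Z \<omega> ^ b) \<and>
     (\<integral>\<omega>. ?S \<omega> ^ a * ?Z \<omega> ^ b \<partial>M) = (\<integral>\<omega>. ?S \<omega> ^ a \<partial>M) * (\<integral>\<omega>. Y \<omega> ^ b \<partial>M)" for a b
  proof -
    have i1: "integrable M (\<lambda>\<omega>. ?S \<omega> ^ a)" using Suc.IH by blast
    have i2: "integrable M (\<lambda>\<omega>. ?Z \<omega> ^ b)" using moment_copy[OF Y r0 I, of Ys "Suc i" b] Ysm[of "Suc i"] D[of "Suc i"] by auto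
    have e2: "(\<integral>\<omega>. ?Z \<omega> ^ b \<partial>M) = (\<integral>\<omega>. Y \<omega> ^ b \<partial>M)" using moment_copy[OF Y r0 I, of Ys "Suc i" b] Ysm[of "Suc i"] D[of "Suc i"] by auto
    show ?thesis
      using indep_var_lebesgue_integral[OF indep_partial[OF ind] i1 i2]
            indep_var_integrable[OF indep_partial[OF ind] i1 i2] e2 by simp
  qed
  have expand: "(\<lambda>\<omega>. partial_sum Ys (Suc i) \<omega> ^ n) =
     (\<lambda>\<omega>. \<Sum>a\<le>n. real (n choose a) * (?S \<omega> ^ a * ?Z \<omega> ^ (n - a)))"
    by (auto simp: partial_sum_Suc binomial_ring fun_eq_iff mult_ac)
  have int: "integrable M (\<lambda>\<omega>. partial_sum Ys (Suc i) \<omega> ^ n)"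
    unfolding expand using prod by (intro Bochner_Integration.integrable_sum integrable_mult_right) auto
  have "(\<integral>\<omega>. partial_sum Ys (Suc i) \<omega> ^ n \<partial>M) =
     (\<Sum>a\<le>n. real (n choose a) * ((\<integral>\<omega>. ?S \<omega> ^ a \<partial>M) * (\<integral>\<omega>. Y \<omega> ^ (n - a) \<partial>M)))"
    unfolding expand using prod
    by (subst Bochner_Integration.integral_sum) (auto simp: integrable_mult_right)
  moreover have "fps_nth (F ^ Suc i) n = (\<Sum>a=0..n. (\<integral>\<omega>. ?S \<omega> ^ a \<partial>M) / fact a * ((\<integral>\<omega>. Y \<omega> ^ (n - a) \<partial>M) / fact (n - a)))"
    using Suc.IH by (simp add: fps_mult_nth F_def power_Suc2 del: power_Suc)
  ultimately have "fps_nth (F ^ Suc i) n = (\<integral>\<omega>. partial_sum Ys (Suc i) \<omega> ^ n \<partial>M) / fact n"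
    by (simp add: sum_divide_distrib atLeast0AtMost binomial_fact field_simps)
  with int show ?case by (simp add: F_def)
qed

end


lemma fps_binom_minus1_nth:
  fixes F :: "real fps"
  shows "fps_nth ((F - 1) ^ k) n = (\<Sum>i\<le>k. real (k choose i) * (-1) ^ (k - i) * fps_nth (F ^ i) n)"
proof -
  have "(F - 1) ^ k = (F + (-1)) ^ k" by simp
  also have "\<dots> = (\<Sum>i\<le>k. fps_const (real (k choose i) * (-1) ^ (k - i)) * F ^ i)"
    unfolding binomial_ring
  proof (intro sum.cong refl)
    fix i
    have "fps_const (real (k choose i) * (-1)^(k - i)) = (of_nat (k choose i) * (-1)^(k - i) :: real fps)"
      by (metis fps_const_mult fps_const_neg fps_const_1_eq_1 fps_const_power fps_of_nat)
    thus "of_nat (k choose i) * F ^ i * (- 1) ^ (k - i) = fps_const (real (k choose i) * (-1) ^ (k - i)) * F ^ i"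
      by (simp only: mult_ac)
  qed
  finally show ?thesis by (simp add: fps_sum_nth)
qed

lemma falling_fact_gchoose: "falling_fact x k / fact k = x gchoose k"
  using gbinomial_mult_fact[of k x]
  by (simp add: falling_fact_def lessThan_atLeast0 field_simps)

theorem theorem2p1:
  fixes M :: "'a measure" and Y :: "'a \<Rightarrow> real" and Ys :: "nat \<Rightarrow> 'a \<Rightarrow> real"
    and r0 :: real and x y :: real and n :: nat
  assumes "prob_space M"
    and "Y \<in> borel_measurable M"
    and "r0 > 0"
    and "\<And>t. \<bar>t\<bar> < r0 \<Longrightarrow> integrable M (\<lambda>\<omega>. exp (t * Y \<omega>))"
    and "prob_space.indep_vars M (\<lambda>_. borel) Ys {1..}"
    and "\<And>j. j \<ge> 1 \<Longrightarrow> Ys j \<in> borel_measurable M"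
    and "\<And>j. j \<ge> 1 \<Longrightarrow> distr M borel (Ys j) = distr M borel Y"
  shows "prob_bell M Y n x y = (\<Sum>k=0..n. prob_stirling M Ys n k * falling_fact x k * y ^ k)"
proof -
  interpret prob_space M by fact
  define F where "F = Abs_fps (\<lambda>k. (\<integral>\<omega>. Y \<omega> ^ k \<partial>M) / fact k)"
  have mf: "mgf_fps M Y = F"
    unfolding F_def using assms by (intro mgf_fps_eq) auto
  have Fi: "fps_nth (F ^ i) n = (\<integral>\<omega>. partial_sum Ys i \<omega> ^ n \<partial>M) / fact n" for i
    unfolding F_def using fps_power_moments[OF assms(2,3,4,5,6,7)] by blast
  have "prob_bell M Y n x y = fact n * (\<Sum>k=0..n. (x gchoose k) * (y ^ k * fps_nth ((F - 1) ^ k) n))"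
    by (simp add: prob_bell_def bell_gf_def mf fps_compose_nth power_mult_distrib)
  also have "\<dots> = (\<Sum>k=0..n. prob_stirling M Ys n k * falling_fact x k * y ^ k)"
    unfolding sum_distrib_left
  proof (intro sum.cong refl)
    fix k assume "k \<in> {0..n}"
    have "fact n * ((x gchoose k) * (y ^ k * fps_nth ((F - 1) ^ k) n)) =
       (falling_fact x k / fact k) * y ^ k * (\<Sum>i\<le>k. real (k choose i) * (-1) ^ (k - i) * (\<integral>\<omega>. partial_sum Ys i \<omega> ^ n \<partial>M))"
      by (simp add: fps_binom_minus1_nth Fi falling_fact_gchoose sum_distrib_left sum_divide_distrib field_simps)
    also have "\<dots> = prob_stirling M Ys n k * falling_fact x k * y ^ k"
      by (simp add: prob_stirling_def atLeast0AtMost field_simps)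
    finally show "fact n * ((x gchoose k) * (y ^ k * fps_nth ((F - 1) ^ k) n)) = prob_stirling M Ys n k * falling_fact x k * y ^ k" .
  qed
  finally show ?thesis .
qed

end
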